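(* Let $K$ be a knot with Alexander polynomial $\Delta_K(t)$, and let $\theta\in\mathbb{R}$. There exists a non-trivial coloring of a diagram of $K$ by $\mathrm{Rot}(\mathbb{E}^2)$ all of whose rotation angles equal $\theta$ (i.e. every arc receives a color of the form $(z,e^{\theta\sqrt{-1}})$) if and only if $\Delta_K(e^{\theta\sqrt{-1}})=0$. Consequently, $K$ is $\mathrm{Rot}(\mathbb{E}^2)$-colorable if and only if $\Delta_K(t)$ has a root on the unit circle in $\mathbb{C}$.
   Context: $\mathrm{Rot}(\mathbb{E}^2)$ denotes the quandle of all rotations of the Euclidean plane, identified with $\mathbb{C}\times \mathrm{U}(1)$ with binary operation $(z,e^{\theta\sqrt{-1}})\ast(w,e^{\eta\sqrt{-1}})=((z-w)e^{\eta\sqrt{-1}}+w,\;e^{\theta\sqrt{-1}})$; the element $(z,e^{\theta\sqrt{-1}})$ is the rotation about $z$ by angle $\theta$. A coloring of an oriented knot diagram $D$ by a quandle $X$ is a map from the set of arcs of $D$ to $X$ such that at every crossing with over arc colored $y$, incoming under arc colored $x$ and outgoing under arc colored $x'$, one has $x'=x\ast y$ if the crossing is positive and $x'\ast y=x$ if it is negative. A constant map is a coloring, called trivial. A knot is $X$-colorable if some diagram of it admits a non-trivial coloring by $X$ (this is independent of the diagram since colorings correspond bijectively under Reidemeister moves). *)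

theory Defs
  imports Complex_Main "Jordan_Normal_Form.Determinant"
    "HOL-Computational_Algebra.Polynomial_Factorial"
begin

(* The quandle Rot(E^2): carrier C x U(1), elements are pairs (z,u) with |u| = 1,
   (z,u) is the rotation about z by the angle arg u. *)
definition rot_carrier :: "(complex \<times> complex) set" where
  "rot_carrier = {(z, u). cmod u = 1}"

definition rot_op :: "complex \<times> complex \<Rightarrow> complex \<times> complex \<Rightarrow> complex \<times> complex" where
  "rot_op x y = ((fst x - fst y) * snd y + fst y, snd x)"

(* Walking along the oriented knot, the under-passages cut it into n arcs, numbered
   0..n-1 in order of traversal.  Crossing i is the crossing at which arc i ends:
   its incoming under arc is i, its outgoing under arc is (i+1) mod n, its over arc is
   dg_over D i, and dg_pos D i says whether the crossing is positive. *)
record knot_diagram =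
  dg_n :: nat
  dg_over :: "nat \<Rightarrow> nat"
  dg_pos :: "nat \<Rightarrow> bool"

definition wf_diagram :: "knot_diagram \<Rightarrow> bool" where
  "wf_diagram D \<longleftrightarrow> dg_n D \<ge> 1 \<and> (\<forall>i < dg_n D. dg_over D i < dg_n D)"

definition is_coloring ::
  "'a set \<Rightarrow> ('a \<Rightarrow> 'a \<Rightarrow> 'a) \<Rightarrow> knot_diagram \<Rightarrow> (nat \<Rightarrow> 'a) \<Rightarrow> bool" where
  "is_coloring X op D c \<longleftrightarrow>
     (\<forall>i < dg_n D. c i \<in> X) \<and>
     (\<forall>i < dg_n D.
        (dg_pos D i \<longrightarrow> c (Suc i mod dg_n D) = op (c i) (c (dg_over D i))) \<and>
        (\<not> dg_pos D i \<longrightarrow> op (c (Suc i mod dg_n D)) (c (dg_over D i)) = c i))"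

definition trivial_coloring :: "knot_diagram \<Rightarrow> (nat \<Rightarrow> 'a) \<Rightarrow> bool" where
  "trivial_coloring D c \<longleftrightarrow> (\<forall>i < dg_n D. \<forall>j < dg_n D. c i = c j)"

definition rot_colorable :: "knot_diagram \<Rightarrow> bool" where
  "rot_colorable D \<longleftrightarrow>
     (\<exists>c. is_coloring rot_carrier rot_op D c \<and> \<not> trivial_coloring D c)"

(* Alexander matrix of the diagram (Fox calculus of the Wirtinger presentation),
   entries in Z[t]:
   positive crossing i:  -t x_i + x_{i+1} + (t-1) x_{over i}
   negative crossing i:  -x_i + t x_{i+1} + (1-t) x_{over i} *)
definition alexander_matrix :: "knot_diagram \<Rightarrow> int poly mat" where
  "alexander_matrix D = mat (dg_n D) (dg_n D) (\<lambda>(i, j).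
      (if j = i then (if dg_pos D i then - [:0, 1:] else -1) else 0)
    + (if j = Suc i mod dg_n D then (if dg_pos D i then 1 else [:0, 1:]) else 0)
    + (if j = dg_over D i then (if dg_pos D i then [:-1, 1:] else [:1, -1:]) else 0))"

(* Alexander polynomial: generator (gcd) of the first elementary ideal,
   i.e. gcd of all (n-1)x(n-1) minors of the Alexander matrix. *)
definition alexander_poly :: "knot_diagram \<Rightarrow> int poly" where
  "alexander_poly D = Gcd {det (mat_delete (alexander_matrix D) r s) | r s.
                              r < dg_n D \<and> s < dg_n D}"

end

theory Submission
  imports Defs "Jordan_Normal_Form.Char_Poly"
begin


definition ev :: "complex \<Rightarrow> int poly \<Rightarrow> complex" where
  "ev u p = poly (map_poly of_int p) u"

lemma ev_mult[simp]: "ev u (p * q) = ev u p * ev u q"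
  by (simp add: ev_def of_int_poly_hom.hom_mult)
lemma ev_add[simp]: "ev u (p + q) = ev u p + ev u q"
  by (simp add: ev_def of_int_poly_hom.hom_add)
lemma ev_diff[simp]: "ev u (p - q) = ev u p - ev u q"
  by (simp add: ev_def of_int_poly_hom.hom_minus)
lemma ev_smult[simp]: "ev u (smult c p) = of_int c * ev u p"
  by (simp add: ev_def map_poly_smult)
lemma ev_0[simp]: "ev u 0 = 0" by (simp add: ev_def)
lemma ev_1[simp]: "ev u 1 = 1" by (simp add: ev_def)

lemma ev_dvd: "ev u p = 0 \<Longrightarrow> p dvd q \<Longrightarrow> ev u q = 0"
  by (metis dvdE ev_mult mult_zero_left)

lemma ev_normalize: "ev u p = 0 \<Longrightarrow> ev u (normalize p) = 0"
  by (rule ev_dvd) auto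

lemma ev_pp: "ev u p = 0 \<Longrightarrow> ev u (primitive_part p) = 0"
proof -
  assume a: "ev u p = 0"
  show ?thesis
  proof (cases "content p = 0")
    case True then have "p = 0" by simp
    then show ?thesis by simp
  next
    case False
    have "ev u p = of_int (content p) * ev u (primitive_part p)"
      by (metis content_times_primitive_part ev_smult)
    with a False show ?thesis by simp
  qed
qed

lemma ev_pseudo_mod: "ev u p = 0 \<Longrightarrow> ev u q = 0 \<Longrightarrow> q \<noteq> 0 \<Longrightarrow> ev u (pseudo_mod p q) = 0"
proof -
  assume a: "ev u p = 0" "ev u q = 0" "q \<noteq> 0"
  obtain r s where rs: "pseudo_divmod p q = (r, s)" by (cases "pseudo_divmod p q") auto
  from pseudo_divmod(1)[OF a(3) rs]
  have "smult (coeff q (degree q) ^ (Suc (degree p) - degree q)) p = q * r + s" .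
  hence "ev u (smult (coeff q (degree q) ^ (Suc (degree p) - degree q)) p) = ev u (q * r + s)" by simp
  hence "ev u s = 0" using a by simp
  moreover have "pseudo_mod p q = s" using rs by (simp add: pseudo_mod_def)
  ultimately show ?thesis by simp
qed

lemma ev_gcd_aux: "ev u p = 0 \<Longrightarrow> ev u q = 0 \<Longrightarrow> ev u (gcd_poly_code_aux p q) = 0"
proof (induction p q rule: gcd_poly_code_aux.induct)
  case (1 p q)
  show ?case
  proof (cases "q = 0")
    case True
    then show ?thesis using 1 by (subst gcd_poly_code_aux.simps) (simp add: ev_normalize)
  next
    case False
    have "ev u (gcd_poly_code_aux q (primitive_part (pseudo_mod p q))) = 0"
      using 1 False by (intro "1.IH" ev_pp ev_pseudo_mod) auto
    then show ?thesis using False by (subst gcd_poly_code_aux.simps) simp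
  qed
qed

lemma ev_gcd: assumes "ev u p = 0" "ev u q = 0" shows "ev u (gcd p q) = 0"
proof -
  have "ev u (gcd_poly_code p q) = 0"
  proof (cases "p = 0")
    case True thus ?thesis using assms by (simp add: gcd_poly_code_def ev_normalize)
  next
    case F1: False
    show ?thesis
    proof (cases "q = 0")
      case True thus ?thesis using assms F1 by (simp add: gcd_poly_code_def ev_normalize)
    next
      case False
      have "ev u (gcd_poly_code_aux (primitive_part p) (primitive_part q)) = 0"
        by (intro ev_gcd_aux ev_pp assms)
      thus ?thesis using F1 False by (simp add: gcd_poly_code_def)
    qed
  qed
  thus ?thesis by (simp only: gcd_poly_code)
qed

lemma ev_Gcd: assumes f: "finite S" shows "(ev u (Gcd S) = 0) \<longleftrightarrow> (\<forall>p\<in>S. ev u p = 0)"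
proof
  assume "ev u (Gcd S) = 0"
  then show "\<forall>p\<in>S. ev u p = 0" using ev_dvd Gcd_dvd by blast
next
  assume h: "\<forall>p\<in>S. ev u p = 0"
  from f h show "ev u (Gcd S) = 0"
  proof (induction S rule: finite_induct)
    case empty then show ?case by simp
  next
    case (insert x F)
    have "ev u (gcd x (Gcd F)) = 0" using insert by (intro ev_gcd) auto
    then show ?case by (simp only: Gcd_insert)
  qed
qed


lemma ev_uminus[simp]: "ev u (- p) = - ev u p"
  by (simp add: ev_def of_int_poly_hom.hom_uminus)
lemma ev_pCons[simp]: "ev u (pCons a p) = of_int a + u * ev u p"
  unfolding ev_def by (cases "a = 0 \<and> p = 0") (auto simp: map_poly_pCons)


lemma mv_index: assumes "A \<in> carrier_mat n n" "v \<in> carrier_vec n" "i < n"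
  shows "(A *\<^sub>v v) $ i = (\<Sum>j<n. A $$ (i,j) * v $ j)"
  using assms by (auto simp: scalar_prod_def atLeast0LessThan intro!: sum.cong)

lemma mm_index: assumes "A \<in> carrier_mat n n" "B \<in> carrier_mat n n" "i < n" "k < n"
  shows "(A * B) $$ (i,k) = (\<Sum>j<n. A $$ (i,j) * B $$ (j,k))"
  using assms by (auto simp: scalar_prod_def atLeast0LessThan intro!: sum.cong)

lemma kernel_minors:
  fixes M :: "'a::field mat"
  assumes M: "M \<in> carrier_mat n n" and s: "s < n"
  shows "(\<exists>w. w \<in> carrier_vec n \<and> w \<noteq> 0\<^sub>v n \<and> w $ s = 0 \<and> M *\<^sub>v w = 0\<^sub>v n)
         \<longleftrightarrow> (\<forall>r<n. det (mat_delete M r s) = 0)"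
proof -
  define N where "N r = mat n n (\<lambda>(i,j). if j = s then (if i = r then 1 else 0) else M $$ (i,j))" for r
  define M0 where "M0 = mat n n (\<lambda>(i,j). if j = s then 0 else M $$ (i,j))"
  have Nc: "N r \<in> carrier_mat n n" for r unfolding N_def by auto
  have M0c: "M0 \<in> carrier_mat n n" unfolding M0_def by auto
  have Ndet: "det (N r) = (-1)^(r+s) * det (mat_delete M r s)" if r: "r < n" for r
  proof -
    have "det (N r) = (\<Sum>i<n. N r $$ (i,s) * cofactor (N r) i s)"
      by (rule laplace_expansion_column[OF Nc s])
    also have "\<dots> = (\<Sum>i<n. if i = r then cofactor (N r) i s else 0)"
      by (rule sum.cong) (auto simp: N_def s)
    also have "\<dots> = cofactor (N r) r s" using r by simp
    also have "mat_delete (N r) r s = mat_delete M r s"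
      using M s r by (intro eq_matI) (auto simp: mat_delete_def N_def)
    hence "cofactor (N r) r s = (-1)^(r+s) * det (mat_delete M r s)"
      by (simp add: cofactor_def)
    finally show ?thesis .
  qed
  have NM: "N r *\<^sub>v w = M *\<^sub>v w" if w: "w \<in> carrier_vec n" "w $ s = 0" for r w
  proof (rule eq_vecI)
    show "dim_vec (N r *\<^sub>v w) = dim_vec (M *\<^sub>v w)" using M Nc[of r] by simp
    fix i assume "i < dim_vec (M *\<^sub>v w)"
    hence i: "i < n" using M by simp
    show "(N r *\<^sub>v w) $ i = (M *\<^sub>v w) $ i"
      unfolding mv_index[OF Nc w(1) i] mv_index[OF M w(1) i]
      by (rule sum.cong) (auto simp: N_def i w(2))
  qed
  have detNiff: "(\<forall>r<n. det (mat_delete M r s) = 0) \<longleftrightarrow> (\<forall>r<n. det (N r) = 0)"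
    using Ndet by auto
  show ?thesis unfolding detNiff
  proof
    assume "\<exists>w. w \<in> carrier_vec n \<and> w \<noteq> 0\<^sub>v n \<and> w $ s = 0 \<and> M *\<^sub>v w = 0\<^sub>v n"
    then obtain w where w: "w \<in> carrier_vec n" "w \<noteq> 0\<^sub>v n" "w $ s = 0" "M *\<^sub>v w = 0\<^sub>v n" by blast
    show "\<forall>r<n. det (N r) = 0"
    proof (intro allI impI)
      fix r assume "r < n"
      show "det (N r) = 0" unfolding det_0_iff_vec_prod_zero_field[OF Nc]
        using w NM[OF w(1) w(3)] by metis
    qed
  next
    assume all: "\<forall>r<n. det (N r) = 0"
    show "\<exists>w. w \<in> carrier_vec n \<and> w \<noteq> 0\<^sub>v n \<and> w $ s = 0 \<and> M *\<^sub>v w = 0\<^sub>v n"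
    proof (rule ccontr)
      assume no: "\<not> ?thesis"
      have "\<forall>r. \<exists>v. r < n \<longrightarrow> (v \<in> carrier_vec n \<and> v \<noteq> 0\<^sub>v n \<and> N r *\<^sub>v v = 0\<^sub>v n)"
        using all det_0_iff_vec_prod_zero_field[OF Nc] by blast
      then obtain v where v: "\<And>r. r < n \<Longrightarrow> v r \<in> carrier_vec n \<and> v r \<noteq> 0\<^sub>v n \<and> N r *\<^sub>v v r = 0\<^sub>v n"
        by metis
      have vs: "v r $ s \<noteq> 0" if r: "r < n" for r
      proof
        assume "v r $ s = 0"
        hence "M *\<^sub>v v r = 0\<^sub>v n" using NM[of "v r"] v[OF r] by metis
        thus False using no v[OF r] \<open>v r $ s = 0\<close> by blast
      qed
      have key: "(\<Sum>j<n. M0 $$ (i,j) * v r $ j) = - (if i = r then v r $ s else 0)"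
        if i: "i < n" and r: "r < n" for i r
      proof -
        have "0 = (N r *\<^sub>v v r) $ i" using v[OF r] i by simp
        also have "\<dots> = (\<Sum>j<n. N r $$ (i,j) * v r $ j)" by (rule mv_index[OF Nc _ i]) (use v[OF r] in auto)
        also have "\<dots> = (\<Sum>j<n. M0 $$ (i,j) * v r $ j + (if j = s then (if i = r then v r $ s else 0) else 0))"
          by (rule sum.cong) (auto simp: N_def M0_def i)
        also have "\<dots> = (\<Sum>j<n. M0 $$ (i,j) * v r $ j) + (if i = r then v r $ s else 0)"
          using s by (simp add: sum.distrib)
        finally show ?thesis by (simp add: eq_neg_iff_add_eq_0 add.commute)
      qed
      define B where "B = mat n n (\<lambda>(j,r). - (v r $ j) / (v r $ s))"
      have Bc: "B \<in> carrier_mat n n" unfolding B_def by auto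
      have "M0 * B = 1\<^sub>m n"
      proof (rule eq_matI)
        fix i r assume "i < dim_row (1\<^sub>m n :: 'a mat)" "r < dim_col (1\<^sub>m n :: 'a mat)"
        hence i: "i < n" and r: "r < n" by auto
        have "(M0 * B) $$ (i,r) = (\<Sum>j<n. M0 $$ (i,j) * (- (v r $ j) / (v r $ s)))"
          unfolding mm_index[OF M0c Bc i r] by (rule sum.cong) (auto simp: B_def r)
        also have "\<dots> = - (\<Sum>j<n. M0 $$ (i,j) * v r $ j) / (v r $ s)"
          by (simp add: sum_divide_distrib sum_negf)
        also have "\<dots> = (if i = r then 1 else 0)" unfolding key[OF i r] using vs[OF r] by simp
        finally show "(M0 * B) $$ (i,r) = 1\<^sub>m n $$ (i,r)" using i r by simp
      qed (use M0c Bc in auto)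
      hence "det (M0 * B) = 1" by simp
      moreover have "det M0 = 0"
      proof -
        have "M0 *\<^sub>v unit_vec n s = 0\<^sub>v n"
        proof (rule eq_vecI)
          fix i assume "i < dim_vec (0\<^sub>v n :: 'a vec)"
          hence i: "i < n" by simp
          have "(M0 *\<^sub>v unit_vec n s) $ i = (\<Sum>j<n. M0 $$ (i,j) * unit_vec n s $ j)"
            by (rule mv_index[OF M0c _ i]) auto
          also have "\<dots> = 0" by (rule sum.neutral) (auto simp: M0_def i unit_vec_def)
          finally show "(M0 *\<^sub>v unit_vec n s) $ i = 0\<^sub>v n $ i" using i by simp
        qed (use M0c in auto)
        moreover have "unit_vec n s \<noteq> (0\<^sub>v n :: 'a vec)"
        proof
          assume "unit_vec n s = (0\<^sub>v n :: 'a vec)"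
          hence "unit_vec n s $ s = (0\<^sub>v n :: 'a vec) $ s" by simp
          thus False using s by simp
        qed
        ultimately show ?thesis unfolding det_0_iff_vec_prod_zero_field[OF M0c]
          by (intro exI[of _ "unit_vec n s"]) auto
      qed
      ultimately show False using det_mult[OF M0c Bc] by simp
    qed
  qed
qed

definition Mu :: "knot_diagram \<Rightarrow> complex \<Rightarrow> complex mat" where
  "Mu D u = map_mat (ev u) (alexander_matrix D)"

definition ca where "ca D u i = (if dg_pos D i then - u else -1)"
definition cb where "cb D u i = (if dg_pos D i then 1 else u)"
definition cc where "cc D u i = (if dg_pos D i then u - 1 else 1 - u)"

lemma Mu_carrier: "Mu D u \<in> carrier_mat (dg_n D) (dg_n D)"
  by (simp add: Mu_def alexander_matrix_def)

lemma Mu_entry: assumes "i < dg_n D" "j < dg_n D"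
  shows "Mu D u $$ (i,j) = (if j = i then ca D u i else 0) + (if j = Suc i mod dg_n D then cb D u i else 0)
     + (if j = dg_over D i then cc D u i else 0)"
  using assms by (simp add: Mu_def alexander_matrix_def ca_def cb_def cc_def)

lemma det_Mu: "det (mat_delete (Mu D u) r s) = ev u (det (mat_delete (alexander_matrix D) r s))"
proof -
  interpret e: comm_ring_hom "ev u" by unfold_locales auto
  have "mat_delete (Mu D u) r s = map_mat (ev u) (mat_delete (alexander_matrix D) r s)"
    by (intro eq_matI) (auto simp: Mu_def mat_delete_def alexander_matrix_def)
  thus ?thesis by simp
qed

lemma sum_ind: "k < (n::nat) \<Longrightarrow> (\<Sum>j<n. (if j = k then a else 0) * f j) = a * (f k :: complex)"
proof -
  assume k: "k < n"
  have "(\<Sum>j<n. (if j = k then a else 0) * f j) = (\<Sum>j<n. if j = k then a * f k else 0)"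
    by (rule sum.cong) auto
  also have "\<dots> = a * f k" using k by (subst sum.delta[OF finite_lessThan]) auto
  finally show ?thesis .
qed

definition rowf where "rowf D u z i = (\<Sum>j<dg_n D. Mu D u $$ (i,j) * z j)"

lemma rowf_eq: assumes wf: "wf_diagram D" and i: "i < dg_n D"
  shows "rowf D u z i = ca D u i * z i + cb D u i * z (Suc i mod dg_n D) + cc D u i * z (dg_over D i)"
proof -
  let ?n = "dg_n D"
  have n: "?n \<ge> 1" and o: "dg_over D i < ?n" using wf i by (auto simp: wf_diagram_def)
  have si: "Suc i mod ?n < ?n" using n by simp
  have "rowf D u z i = (\<Sum>j<?n. (if j = i then ca D u i else 0) * z j + (if j = Suc i mod ?n then cb D u i else 0) * z j
     + (if j = dg_over D i then cc D u i else 0) * z j)"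
    unfolding rowf_def by (rule sum.cong) (auto simp: Mu_entry i distrib_right)
  also have "\<dots> = ca D u i * z i + cb D u i * z (Suc i mod dg_n D) + cc D u i * z (dg_over D i)"
    by (simp add: sum.distrib sum_ind[OF i] sum_ind[OF si] sum_ind[OF o])
  finally show ?thesis .
qed

lemma rowf_shift: assumes wf: "wf_diagram D" and i: "i < dg_n D"
  shows "rowf D u (\<lambda>j. z j - k) i = rowf D u z i"
  unfolding rowf_eq[OF wf i] by (simp add: ca_def cb_def cc_def algebra_simps)

lemma cross_pos: "(z' = (z - w) * u + w) \<longleftrightarrow> (- u * z + 1 * z' + (u - 1) * w = (0::complex))"
  by (auto simp: algebra_simps)

lemma cross_neg: "((z' - w) * u + w = z) \<longleftrightarrow> (- 1 * z + u * z' + (1 - u) * w = (0::complex))"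
  by (auto simp: algebra_simps)
lemma cross_ok:
  assumes wf: "wf_diagram D" and i: "i < dg_n D" and c: "\<forall>k<dg_n D. c k = (z k, u)"
  shows "((dg_pos D i \<longrightarrow> c (Suc i mod dg_n D) = rot_op (c i) (c (dg_over D i))) \<and>
         (\<not> dg_pos D i \<longrightarrow> rot_op (c (Suc i mod dg_n D)) (c (dg_over D i)) = c i))
         \<longleftrightarrow> rowf D u z i = 0"
proof -
  let ?n = "dg_n D" let ?s = "Suc i mod dg_n D" let ?o = "dg_over D i"
  have n: "?n \<ge> 1" and o: "?o < ?n" using wf i by (auto simp: wf_diagram_def)
  have si: "?s < ?n" using n by simp
  have ci: "c i = (z i, u)" and cs: "c ?s = (z ?s, u)" and co: "c ?o = (z ?o, u)"
    using c i si o by auto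
  show ?thesis
  proof (cases "dg_pos D i")
    case True
    have r: "rowf D u z i = - u * z i + 1 * z ?s + (u - 1) * z ?o"
      using True by (simp add: rowf_eq[OF wf i] ca_def cb_def cc_def)
    have "(c ?s = rot_op (c i) (c ?o)) \<longleftrightarrow> z ?s = (z i - z ?o) * u + z ?o"
      by (simp add: ci cs co rot_op_def)
    also have "\<dots> \<longleftrightarrow> rowf D u z i = 0" unfolding r by (rule cross_pos)
    finally show ?thesis using True by simp
  next
    case False
    have r: "rowf D u z i = - 1 * z i + u * z ?s + (1 - u) * z ?o"
      using False by (simp add: rowf_eq[OF wf i] ca_def cb_def cc_def)
    have "(rot_op (c ?s) (c ?o) = c i) \<longleftrightarrow> (z ?s - z ?o) * u + z ?o = z i"
      by (simp add: ci cs co rot_op_def)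
    also have "\<dots> \<longleftrightarrow> rowf D u z i = 0" unfolding r by (rule cross_neg)
    finally show ?thesis using False by simp
  qed
qed

lemma color_iff:
  assumes wf: "wf_diagram D" and u: "cmod u = 1"
  shows "(\<exists>c. is_coloring rot_carrier rot_op D c \<and> \<not> trivial_coloring D c \<and> (\<forall>i<dg_n D. snd (c i) = u))
     \<longleftrightarrow> (\<exists>z. (\<forall>i<dg_n D. rowf D u z i = 0) \<and> \<not> (\<forall>i<dg_n D. \<forall>j<dg_n D. z i = z j))"
proof
  assume "\<exists>c. is_coloring rot_carrier rot_op D c \<and> \<not> trivial_coloring D c \<and> (\<forall>i<dg_n D. snd (c i) = u)"
  then obtain c where col: "is_coloring rot_carrier rot_op D c" and nt: "\<not> trivial_coloring D c"
    and sn: "\<forall>i<dg_n D. snd (c i) = u" by blast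
  define z where "z k = fst (c k)" for k
  have c: "\<forall>k<dg_n D. c k = (z k, u)"
  proof (intro allI impI)
    fix k assume "k < dg_n D"
    thus "c k = (z k, u)" using sn by (simp add: z_def prod_eq_iff)
  qed
  have rows: "\<forall>i<dg_n D. rowf D u z i = 0"
  proof (intro allI impI)
    fix i assume i: "i < dg_n D"
    have "(dg_pos D i \<longrightarrow> c (Suc i mod dg_n D) = rot_op (c i) (c (dg_over D i))) \<and>
        (\<not> dg_pos D i \<longrightarrow> rot_op (c (Suc i mod dg_n D)) (c (dg_over D i)) = c i)"
      using conjunct2[OF col[unfolded is_coloring_def], rule_format, OF i] .
    thus "rowf D u z i = 0" by (rule cross_ok[OF wf i c, THEN iffD1])
  qed
  have "\<not> (\<forall>i<dg_n D. \<forall>j<dg_n D. c i = c j)" using nt by (simp add: trivial_coloring_def)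
  then obtain i j where i: "i < dg_n D" and j: "j < dg_n D" and cij: "c i \<noteq> c j"
    by auto
  have "z i \<noteq> z j"
  proof
    assume "z i = z j"
    hence "c i = c j" using c i j by simp
    thus False using cij by simp
  qed
  hence "\<not> (\<forall>i<dg_n D. \<forall>j<dg_n D. z i = z j)" using i j by blast
  with rows show "\<exists>z. (\<forall>i<dg_n D. rowf D u z i = 0) \<and> \<not> (\<forall>i<dg_n D. \<forall>j<dg_n D. z i = z j)" by blast
next
  assume "\<exists>z. (\<forall>i<dg_n D. rowf D u z i = 0) \<and> \<not> (\<forall>i<dg_n D. \<forall>j<dg_n D. z i = z j)"
  then obtain z where rows: "\<forall>i<dg_n D. rowf D u z i = 0"
    and nc: "\<not> (\<forall>i<dg_n D. \<forall>j<dg_n D. z i = z j)" by blast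
  define c where "c k = (z k, u)" for k
  have c: "\<forall>k<dg_n D. c k = (z k, u)" by (simp add: c_def)
  have car: "\<forall>i<dg_n D. c i \<in> rot_carrier" using u by (simp add: c_def rot_carrier_def)
  have cr: "\<forall>i<dg_n D. (dg_pos D i \<longrightarrow> c (Suc i mod dg_n D) = rot_op (c i) (c (dg_over D i))) \<and>
        (\<not> dg_pos D i \<longrightarrow> rot_op (c (Suc i mod dg_n D)) (c (dg_over D i)) = c i)"
  proof (intro allI impI)
    fix i assume i: "i < dg_n D"
    show "(dg_pos D i \<longrightarrow> c (Suc i mod dg_n D) = rot_op (c i) (c (dg_over D i))) \<and>
        (\<not> dg_pos D i \<longrightarrow> rot_op (c (Suc i mod dg_n D)) (c (dg_over D i)) = c i)"
      by (rule cross_ok[OF wf i c, THEN iffD2]) (use rows i in simp)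
  qed
  have "is_coloring rot_carrier rot_op D c"
    unfolding is_coloring_def using car cr by (rule conjI)
  moreover have "\<not> trivial_coloring D c"
  proof
    assume t: "trivial_coloring D c"
    have "\<forall>i<dg_n D. \<forall>j<dg_n D. z i = z j"
    proof (intro allI impI)
      fix i j assume i: "i < dg_n D" and j: "j < dg_n D"
      have "c i = c j" using t[unfolded trivial_coloring_def, rule_format, OF i j] .
      thus "z i = z j" by (simp add: c_def)
    qed
    thus False using nc by blast
  qed
  moreover have "\<forall>i<dg_n D. snd (c i) = u" by (simp add: c_def)
  ultimately show "\<exists>c. is_coloring rot_carrier rot_op D c \<and> \<not> trivial_coloring D c \<and> (\<forall>i<dg_n D. snd (c i) = u)"
    by (intro exI[of _ c] conjI)
qed

lemma rowf_cong: "(\<And>j. j < dg_n D \<Longrightarrow> f j = g j) \<Longrightarrow> rowf D u f i = rowf D u g i"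
  unfolding rowf_def by (rule sum.cong) auto

lemma mv_zero:
  assumes v: "v \<in> carrier_vec (dg_n D)"
  shows "Mu D u *\<^sub>v v = 0\<^sub>v (dg_n D) \<longleftrightarrow> (\<forall>i<dg_n D. rowf D u (\<lambda>j. v $ j) i = 0)"
proof
  assume h: "Mu D u *\<^sub>v v = 0\<^sub>v (dg_n D)"
  show "\<forall>i<dg_n D. rowf D u (\<lambda>j. v $ j) i = 0"
  proof (intro allI impI)
    fix i assume i: "i < dg_n D"
    have "(Mu D u *\<^sub>v v) $ i = 0" using h i by simp
    thus "rowf D u (\<lambda>j. v $ j) i = 0" using mv_index[OF Mu_carrier v i] unfolding rowf_def by simp
  qed
next
  assume h: "\<forall>i<dg_n D. rowf D u (\<lambda>j. v $ j) i = 0"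
  show "Mu D u *\<^sub>v v = 0\<^sub>v (dg_n D)"
  proof (rule eq_vecI)
    fix i assume "i < dim_vec (0\<^sub>v (dg_n D) :: complex vec)"
    hence i: "i < dg_n D" by simp
    show "(Mu D u *\<^sub>v v) $ i = 0\<^sub>v (dg_n D) $ i"
      using mv_index[OF Mu_carrier v i] h i unfolding rowf_def by simp
  qed (use Mu_carrier in auto)
qed

lemma ker_iff:
  assumes wf: "wf_diagram D"
  shows "(\<exists>z. (\<forall>i<dg_n D. rowf D u z i = 0) \<and> \<not> (\<forall>i<dg_n D. \<forall>j<dg_n D. z i = z j))
     \<longleftrightarrow> (\<forall>r<dg_n D. \<forall>s<dg_n D. det (mat_delete (Mu D u) r s) = 0)"
proof
  assume "\<exists>z. (\<forall>i<dg_n D. rowf D u z i = 0) \<and> \<not> (\<forall>i<dg_n D. \<forall>j<dg_n D. z i = z j)"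
  then obtain z i0 j0 where rows: "\<forall>i<dg_n D. rowf D u z i = 0" and i0: "i0 < dg_n D" and j0: "j0 < dg_n D"
    and ne: "z i0 \<noteq> z j0" by blast
  show "\<forall>r<dg_n D. \<forall>s<dg_n D. det (mat_delete (Mu D u) r s) = 0"
  proof (intro allI impI)
    fix r s assume r: "r < dg_n D" and s: "s < dg_n D"
    define w where "w = vec (dg_n D) (\<lambda>j. z j - z s)"
    have wc: "w \<in> carrier_vec (dg_n D)" by (simp add: w_def)
    have ws: "w $ s = 0" using s by (simp add: w_def)
    have wnz: "w \<noteq> 0\<^sub>v (dg_n D)"
    proof
      assume "w = 0\<^sub>v (dg_n D)"
      hence "w $ i0 = 0" "w $ j0 = 0" using i0 j0 by auto
      thus False using ne i0 j0 by (simp add: w_def)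
    qed
    have "\<forall>i<dg_n D. rowf D u (\<lambda>j. w $ j) i = 0"
    proof (intro allI impI)
      fix i assume i: "i < dg_n D"
      have "rowf D u (\<lambda>j. w $ j) i = rowf D u (\<lambda>j. z j - z s) i"
        by (rule rowf_cong) (simp add: w_def)
      also have "\<dots> = rowf D u z i" by (rule rowf_shift[OF wf i])
      finally show "rowf D u (\<lambda>j. w $ j) i = 0" using rows i by simp
    qed
    hence "Mu D u *\<^sub>v w = 0\<^sub>v (dg_n D)" using mv_zero[OF wc] by blast
    hence "\<forall>r<dg_n D. det (mat_delete (Mu D u) r s) = 0"
      using kernel_minors[OF Mu_carrier s] wc wnz ws by blast
    thus "det (mat_delete (Mu D u) r s) = 0" using r by blast
  qed
next
  assume all: "\<forall>r<dg_n D. \<forall>s<dg_n D. det (mat_delete (Mu D u) r s) = 0"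
  have n: "0 < dg_n D" using wf by (simp add: wf_diagram_def)
  from all have "\<forall>r<dg_n D. det (mat_delete (Mu D u) r 0) = 0" using n by blast
  then obtain w where wc: "w \<in> carrier_vec (dg_n D)" and wnz: "w \<noteq> 0\<^sub>v (dg_n D)"
    and w0: "w $ 0 = 0" and mw: "Mu D u *\<^sub>v w = 0\<^sub>v (dg_n D)"
    using kernel_minors[OF Mu_carrier n] by blast
  have rows: "\<forall>i<dg_n D. rowf D u (\<lambda>j. w $ j) i = 0" using mv_zero[OF wc] mw by blast
  obtain i where i: "i < dg_n D" and wi: "w $ i \<noteq> 0"
  proof -
    have "\<exists>i<dg_n D. w $ i \<noteq> 0"
    proof (rule ccontr)
      assume "\<not> ?thesis"
      hence "w = 0\<^sub>v (dg_n D)" using wc by (intro eq_vecI) auto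
      thus False using wnz by simp
    qed
    thus ?thesis using that by blast
  qed
  have "\<not> (\<forall>i<dg_n D. \<forall>j<dg_n D. w $ i = w $ j)"
  proof
    assume "\<forall>i<dg_n D. \<forall>j<dg_n D. w $ i = w $ j"
    hence "w $ i = w $ 0" using i n by blast
    thus False using wi w0 by simp
  qed
  with rows show "\<exists>z. (\<forall>i<dg_n D. rowf D u z i = 0) \<and> \<not> (\<forall>i<dg_n D. \<forall>j<dg_n D. z i = z j)"
    by blast
qed

lemma minors_iff:
  "(\<forall>r<dg_n D. \<forall>s<dg_n D. det (mat_delete (Mu D u) r s) = 0) \<longleftrightarrow> ev u (alexander_poly D) = 0"
proof -
  let ?S = "{det (mat_delete (alexander_matrix D) r s) | r s. r < dg_n D \<and> s < dg_n D}"
  have fin: "finite ?S" by (rule finite_image_set2) auto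
  have "ev u (alexander_poly D) = 0 \<longleftrightarrow> (\<forall>p\<in>?S. ev u p = 0)"
    unfolding alexander_poly_def by (rule ev_Gcd[OF fin])
  also have "\<dots> \<longleftrightarrow> (\<forall>r<dg_n D. \<forall>s<dg_n D. det (mat_delete (Mu D u) r s) = 0)"
    unfolding det_Mu by blast
  finally show ?thesis by simp
qed

lemma key:
  assumes wf: "wf_diagram D" and u: "cmod u = 1"
  shows "(\<exists>c. is_coloring rot_carrier rot_op D c \<and> \<not> trivial_coloring D c \<and> (\<forall>i<dg_n D. snd (c i) = u))
     \<longleftrightarrow> poly (map_poly of_int (alexander_poly D)) u = 0"
  using color_iff[OF wf u] ker_iff[OF wf] minors_iff[of D u] by (simp add: ev_def)

lemma snd_const:
  assumes wf: "wf_diagram D" and col: "is_coloring rot_carrier rot_op D c"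
  shows "\<forall>i<dg_n D. snd (c i) = snd (c 0)"
proof (intro allI impI)
  fix i show "i < dg_n D \<Longrightarrow> snd (c i) = snd (c 0)"
  proof (induction i)
    case 0 then show ?case by simp
  next
    case (Suc i)
    hence i: "i < dg_n D" and m: "Suc i mod dg_n D = Suc i" by auto
    have h: "(dg_pos D i \<longrightarrow> c (Suc i mod dg_n D) = rot_op (c i) (c (dg_over D i))) \<and>
        (\<not> dg_pos D i \<longrightarrow> rot_op (c (Suc i mod dg_n D)) (c (dg_over D i)) = c i)"
      using conjunct2[OF col[unfolded is_coloring_def], rule_format, OF i] .
    have "snd (c (Suc i)) = snd (c i)"
    proof (cases "dg_pos D i")
      case True
      with h m have "c (Suc i) = rot_op (c i) (c (dg_over D i))" by simp
      thus ?thesis by (simp add: rot_op_def)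
    next
      case False
      with h m have "rot_op (c (Suc i)) (c (dg_over D i)) = c i" by simp
      hence "snd (rot_op (c (Suc i)) (c (dg_over D i))) = snd (c i)" by simp
      thus ?thesis by (simp add: rot_op_def)
    qed
    with Suc i show ?case by simp
  qed
qed

theorem mainTheorem2:
  fixes D :: knot_diagram
  assumes "wf_diagram D"
  shows "(\<forall>\<theta>::real.
            (\<exists>c. is_coloring rot_carrier rot_op D c \<and> \<not> trivial_coloring D c \<and>
                 (\<forall>i < dg_n D. snd (c i) = cis \<theta>))
            \<longleftrightarrow> poly (map_poly of_int (alexander_poly D)) (cis \<theta>) = (0::complex))
       \<and> (rot_colorable D \<longleftrightarrow>
            (\<exists>z::complex. cmod z = 1 \<and> poly (map_poly of_int (alexander_poly D)) z = 0))"
proof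
  show "\<forall>\<theta>::real.
            (\<exists>c. is_coloring rot_carrier rot_op D c \<and> \<not> trivial_coloring D c \<and>
                 (\<forall>i < dg_n D. snd (c i) = cis \<theta>))
            \<longleftrightarrow> poly (map_poly of_int (alexander_poly D)) (cis \<theta>) = (0::complex)"
    using key[OF assms] by simp
next
  show "rot_colorable D \<longleftrightarrow>
            (\<exists>z::complex. cmod z = 1 \<and> poly (map_poly of_int (alexander_poly D)) z = 0)"
  proof
    assume "rot_colorable D"
    then obtain c where col: "is_coloring rot_carrier rot_op D c" and nt: "\<not> trivial_coloring D c"
      unfolding rot_colorable_def by blast
    have n: "0 < dg_n D" using assms by (simp add: wf_diagram_def)
    have "c 0 \<in> rot_carrier" using col n unfolding is_coloring_def by blast
    hence u: "cmod (snd (c 0)) = 1" by (auto simp: rot_carrier_def)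
    have "\<forall>i<dg_n D. snd (c i) = snd (c 0)" by (rule snd_const[OF assms col])
    hence "poly (map_poly of_int (alexander_poly D)) (snd (c 0)) = 0"
      using key[OF assms u] col nt by blast
    thus "\<exists>z::complex. cmod z = 1 \<and> poly (map_poly of_int (alexander_poly D)) z = 0"
      using u by blast
  next
    assume "\<exists>z::complex. cmod z = 1 \<and> poly (map_poly of_int (alexander_poly D)) z = 0"
    then obtain z where "cmod z = 1" "poly (map_poly of_int (alexander_poly D)) z = 0" by blast
    thus "rot_colorable D" using key[OF assms, of z] unfolding rot_colorable_def by blast
  qed
qed

end
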